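(* Let $\odot$ be a pseudo-multiplication on $[0,\infty]$ with left identity $1_{\odot}$, and let $F_{\odot}$ be the set of $\odot$-finite elements. The following conditions are equivalent: (1) $\odot$ is non-degenerate, i.e. $1_{\odot}$ is $\odot$-finite; (2) there exists some $t>0$ that is $\odot$-finite; (3) the monoid $([0,1_{\odot}],\odot)$ is commutative; (4) $F_{\odot}$ is either $[0,\infty]$ or of the form $[0,\phi)$ for some $\phi\in(1_{\odot},\infty]$. Moreover, if $F_{\odot}=[0,\phi)$, then $O(\phi)=\phi$ and $t\odot\phi=\phi\odot t=\phi$ for all $0<t\leqslant\phi$; in particular $\phi\odot\phi=\phi$.
   Context: A pseudo-multiplication is a binary operation $\odot:[0,\infty]\times[0,\infty]\to[0,\infty]$ such that: $\odot$ is associative; $\odot$ is continuous on $(0,\infty)\times[0,\infty]$; for every $t$, the map $s\mapsto s\odot t$ is continuous on $(0,\infty]$; $\odot$ is nondecreasing in each argument; there is a left identity element $1_{\odot}$, i.e. $1_{\odot}\odot t=t$ for all $t$; there are no zero divisors, i.e. $s\odot t=0$ implies $s=0$ or $t=0$; and $0$ is an annihilator, i.e. $0\odot t=t\odot 0=0$ for all $t$. For $t\in[0,\infty]$ put $O(t)=\inf_{s>0} s\odot t$. An element $t$ is called $\odot$-finite if $O(t)=0$, and $\odot$-infinite otherwise. The pseudo-multiplication $\odot$ is called non-degenerate if $O(1_{\odot})=0$. *)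

theory Defs
  imports "HOL-Analysis.Analysis" "HOL-Library.Extended_Nonnegative_Real"
begin

definition pseudo_mult :: "(ennreal \<Rightarrow> ennreal \<Rightarrow> ennreal) \<Rightarrow> ennreal \<Rightarrow> bool" where
  "pseudo_mult m e \<longleftrightarrow>
     (\<forall>a b c. m (m a b) c = m a (m b c)) \<and>
     continuous_on ({0<..<\<infinity>} \<times> UNIV) (\<lambda>(s, t). m s t) \<and>
     (\<forall>t. continuous_on {0<..} (\<lambda>s. m s t)) \<and>
     (\<forall>a b c. a \<le> b \<longrightarrow> m a c \<le> m b c) \<and>
     (\<forall>a b c. a \<le> b \<longrightarrow> m c a \<le> m c b) \<and>
     (\<forall>t. m e t = t) \<and>
     (\<forall>s t. m s t = 0 \<longrightarrow> s = 0 \<or> t = 0) \<and>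
     (\<forall>t. m 0 t = 0 \<and> m t 0 = 0)"

definition pm_O :: "(ennreal \<Rightarrow> ennreal \<Rightarrow> ennreal) \<Rightarrow> ennreal \<Rightarrow> ennreal" where
  "pm_O m t = (INF s\<in>{0<..}. m s t)"

definition pm_finite_set :: "(ennreal \<Rightarrow> ennreal \<Rightarrow> ennreal) \<Rightarrow> ennreal set" where
  "pm_finite_set m = {t. pm_O m t = 0}"

definition pm_nondegenerate :: "(ennreal \<Rightarrow> ennreal \<Rightarrow> ennreal) \<Rightarrow> ennreal \<Rightarrow> bool" where
  "pm_nondegenerate m e \<longleftrightarrow> pm_O m e = 0"

end

theory Submission
  imports Defs
begin

lemma ev_right:
  fixes c :: ennreal
  assumes "eventually P (at c within S)" "c < \<infinity>"
  shows "\<exists>b>c. \<forall>u. c < u \<and> u < b \<and> u \<in> S \<longrightarrow> P u"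
proof -
  obtain T where T: "open T" "c \<in> T" "\<forall>x\<in>T. x \<noteq> c \<longrightarrow> x \<in> S \<longrightarrow> P x"
    using assms(1) unfolding eventually_at_topological by blast
  obtain b where b: "b > c" "{c..<b} \<subseteq> T" using open_right[OF T(1,2) assms(2)] by blast
  show ?thesis
  proof (intro exI[of _ b] conjI allI impI)
    fix u assume u: "c < u \<and> u < b \<and> u \<in> S"
    then have "u \<in> T" using b(2) by auto
    then show "P u" using T(3) u by auto
  qed (fact b)
qed

lemma ev_left:
  fixes c :: ennreal
  assumes "eventually P (at c within S)" "0 < c"
  shows "\<exists>b<c. \<forall>u. b < u \<and> u < c \<and> u \<in> S \<longrightarrow> P u"
proof -
  obtain T where T: "open T" "c \<in> T" "\<forall>x\<in>T. x \<noteq> c \<longrightarrow> x \<in> S \<longrightarrow> P x"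
    using assms(1) unfolding eventually_at_topological by blast
  obtain b where b: "b < c" "{b<..c} \<subseteq> T" using open_left[OF T(1,2) assms(2)] by blast
  show ?thesis
  proof (intro exI[of _ b] conjI allI impI)
    fix u assume u: "b < u \<and> u < c \<and> u \<in> S"
    then have "u \<in> T" using b(2) by auto
    then show "P u" using T(3) u by auto
  qed (fact b)
qed

primrec pw :: "(ennreal \<Rightarrow> ennreal \<Rightarrow> ennreal) \<Rightarrow> ennreal \<Rightarrow> nat \<Rightarrow> ennreal" where
  "pw m x 0 = x"
| "pw m x (Suc n) = m (pw m x n) x"

lemma least_step: "P n \<Longrightarrow> \<not> P 0 \<Longrightarrow> \<exists>i. \<not> P i \<and> P (Suc i)"
  by (induction n) auto

locale PM =
  fixes m :: "ennreal \<Rightarrow> ennreal \<Rightarrow> ennreal" and e :: ennreal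
  assumes pm: "pseudo_mult m e"
begin

lemma pmC: "(\<forall>a b c. m (m a b) c = m a (m b c))"
     "continuous_on ({0<..<\<infinity>} \<times> UNIV) (\<lambda>(s, t). m s t)"
     "(\<forall>t. continuous_on {0<..} (\<lambda>s. m s t))"
     "(\<forall>a b c. a \<le> b \<longrightarrow> m a c \<le> m b c)"
     "(\<forall>a b c. a \<le> b \<longrightarrow> m c a \<le> m c b)"
     "(\<forall>t. m e t = t)"
     "(\<forall>s t. m s t = 0 \<longrightarrow> s = 0 \<or> t = 0)"
     "(\<forall>t. m 0 t = 0 \<and> m t 0 = 0)"
  using pm unfolding pseudo_mult_def by auto

lemma assoc: "m (m a b) c = m a (m b c)" using pmC(1) by simp
lemma mono1: "a \<le> b \<Longrightarrow> m a c \<le> m b c" using pmC(4) by simp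
lemma mono2: "a \<le> b \<Longrightarrow> m c a \<le> m c b" using pmC(5) by simp
lemma lid[simp]: "m e t = t" using pmC(6) by simp
lemma nzd: "m s t = 0 \<Longrightarrow> s = 0 \<or> t = 0" using pmC(7) by simp
lemma zero[simp]: "m 0 t = 0" "m t 0 = 0" using pmC(8) by simp_all
lemma pos: "0 < s \<Longrightarrow> 0 < t \<Longrightarrow> 0 < m s t" using nzd[of s t] by (auto simp: zero_less_iff_neq_zero)
lemma cont1: "continuous_on {0<..} (\<lambda>s. m s t)" using pmC(3) by simp
lemma contj: "continuous_on ({0<..<\<infinity>} \<times> UNIV) (\<lambda>(s, t). m s t)"
  using pmC(2) .

lemma cont2: assumes "0 < s" "s < \<infinity>" shows "continuous_on UNIV (m s)"
proof -
  have "continuous_on UNIV (\<lambda>t. (\<lambda>(s, t). m s t) (s, t))"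
    apply (rule continuous_on_compose2[OF contj])
     apply (intro continuous_intros)
    using assms by auto
  thus ?thesis by simp
qed

lemma contd: "continuous_on {0<..<\<infinity>} (\<lambda>u. m u u)"
proof -
  have "continuous_on {0<..<\<infinity>} (\<lambda>u. (\<lambda>(s, t). m s t) (u, u))"
    apply (rule continuous_on_compose2[OF contj])
     apply (intro continuous_intros)
    by auto
  thus ?thesis by simp
qed

lemma e_pos: "0 < e"
proof (rule ccontr)
  assume "\<not> 0 < e" hence "e = 0" by simp
  hence "m e 1 = 0" by simp
  thus False by simp
qed

abbreviation Ob where "Ob \<equiv> pm_O m"

lemma O_le: "0 < s \<Longrightarrow> Ob t \<le> m s t" unfolding pm_O_def by (rule INF_lower) auto
lemma O_le_self: "Ob t \<le> t" using O_le[OF e_pos, of t] by simp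
lemma O_mono: "a \<le> b \<Longrightarrow> Ob a \<le> Ob b"
  unfolding pm_O_def by (rule INF_mono) (auto intro: mono2)
lemma O_zero[simp]: "Ob 0 = 0" using O_le_self[of 0] by simp

lemma INF_comp0:
  fixes g :: "ennreal \<Rightarrow> ennreal"
  assumes gp: "\<And>s. 0 < s \<Longrightarrow> 0 < g s" and gi: "(INF s\<in>{0<..}. g s) = 0"
  shows "(INF s\<in>{0<..}. m (g s) x) = Ob x"
proof (rule antisym)
  show "(INF s\<in>{0<..}. m (g s) x) \<le> Ob x"
    unfolding pm_O_def
  proof (rule INF_greatest)
    fix u :: ennreal assume u: "u \<in> {0<..}"
    hence "(INF s\<in>{0<..}. g s) < u" using gi by simp
    then obtain s where s: "s \<in> {0<..}" "g s < u" by (auto simp: INF_less_iff)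
    have "(INF s\<in>{0<..}. m (g s) x) \<le> m (g s) x" using s by (intro INF_lower)
    also have "\<dots> \<le> m u x" using s by (intro mono1) simp
    finally show "(INF s\<in>{0<..}. m (g s) x) \<le> m u x" .
  qed
  show "Ob x \<le> (INF s\<in>{0<..}. m (g s) x)"
    by (rule INF_greatest) (intro O_le gp, simp)
qed

lemma INF_compc:
  fixes g :: "ennreal \<Rightarrow> ennreal"
  assumes gc: "\<And>s. 0 < s \<Longrightarrow> c \<le> g s" and gi: "(INF s\<in>{0<..}. g s) = c" and c: "0 < c"
  shows "(INF s\<in>{0<..}. m (g s) x) = m c x"
proof (rule antisym)
  show "m c x \<le> (INF s\<in>{0<..}. m (g s) x)" by (rule INF_greatest) (simp add: gc mono1)
  show "(INF s\<in>{0<..}. m (g s) x) \<le> m c x"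
  proof (rule ccontr)
    assume "\<not> ?thesis"
    hence "m c x < (INF s\<in>{0<..}. m (g s) x)" by simp
    then obtain y where y: "m c x < y" "y < (INF s\<in>{0<..}. m (g s) x)" using dense by blast
    have "\<exists>s>0. m (g s) x < y"
    proof (cases "c = \<infinity>")
      case True
      then have "g 1 = \<infinity>" using gc[of 1] by (simp add: top_unique)
      thus ?thesis using y True by (intro exI[of _ 1]) auto
    next
      case False
      then have cinf: "c < \<infinity>" by (simp add: less_top)
      have "((\<lambda>s. m s x) \<longlongrightarrow> m c x) (at c within {0<..})"
        using cont1[of x] c unfolding continuous_on_def by auto
      then have "eventually (\<lambda>u. m u x < y) (at c within {0<..})" using y(1) by (rule order_tendstoD(2))
      from ev_right[OF this cinf] obtain b where
        b: "b > c" "\<forall>u. c < u \<and> u < b \<and> u \<in> {0<..} \<longrightarrow> m u x < y" by blast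
      have "(INF s\<in>{0<..}. g s) < b" using gi b(1) by simp
      then obtain s where s: "s \<in> {0<..}" "g s < b" by (auto simp: INF_less_iff)
      show ?thesis
      proof (cases "g s = c")
        case True thus ?thesis using s y(1) by auto
      next
        case False
        hence "c < g s" using gc[of s] s by auto
        hence "m (g s) x < y" using b(2) s c by auto
        thus ?thesis using s by auto
      qed
    qed
    then obtain s where "s > 0" "m (g s) x < y" by blast
    hence "(INF s\<in>{0<..}. m (g s) x) < y" by (auto simp: INF_less_iff)
    thus False using y(2) by simp
  qed
qed

lemma O_mult_eq: "Ob (m a b) = (INF s\<in>{0<..}. m (m s a) b)" unfolding pm_O_def by (simp add: assoc)

lemma O_mult_F: assumes "Ob a = 0" "0 < a" shows "Ob (m a b) = Ob b"
proof -
  have "Ob (m a b) = (INF s\<in>{0<..}. m (m s a) b)" by (rule O_mult_eq)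
  also have "\<dots> = Ob b" by (rule INF_comp0) (use assms pos in \<open>auto simp: pm_O_def\<close>)
  finally show ?thesis .
qed

lemma O_mult_pos: assumes "0 < Ob a" shows "Ob (m a b) = m (Ob a) b"
proof -
  have "Ob (m a b) = (INF s\<in>{0<..}. m (m s a) b)" by (rule O_mult_eq)
  also have "\<dots> = m (Ob a) b" by (rule INF_compc) (use assms O_le in \<open>auto simp: pm_O_def\<close>)
  finally show ?thesis .
qed

lemma O_e_pos: assumes "0 < Ob e" shows "m (Ob e) x = Ob x"
  using O_mult_pos[OF assms, of x] by simp

lemma degen_no_pos: assumes "0 < Ob e" "0 < t" shows "0 < Ob t"
  using O_e_pos[OF assms(1), of t] pos[OF assms] by simp

lemma degen_noncomm: assumes c: "0 < Ob e" shows "\<exists>a\<in>{0..e}. \<exists>b\<in>{0..e}. m a b \<noteq> m b a"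
proof -
  obtain a where a: "0 < a" "a < Ob e" using dense[OF c] by blast
  have ce: "Ob e \<le> e" by (rule O_le_self)
  have 1: "m (Ob e) a < Ob e" using O_e_pos[OF c, of a] O_le_self[of a] a by simp
  have "m (Ob e) e = Ob e" using O_e_pos[OF c, of e] .
  hence "m a (Ob e) = m (m a (Ob e)) e" by (metis assoc)
  also have "\<dots> \<ge> Ob e" by (rule O_le) (intro pos a c)
  finally have "m (Ob e) a \<noteq> m a (Ob e)" using 1 by auto
  thus ?thesis using a ce by (intro bexI[of _ "Ob e"] bexI[of _ a]) auto
qed

lemma F_down: "Ob t = 0 \<Longrightarrow> s \<le> t \<Longrightarrow> Ob s = 0"
  using O_mono[of s t] by simp

lemma F_up: assumes N: "Ob e = 0" and t: "Ob t = 0" "t < \<infinity>" shows "\<exists>t'>t. Ob t' = 0"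
proof (cases "t < e")
  case True thus ?thesis using N by blast
next
  case False
  hence et: "e \<le> t" by simp
  have "Ob t < e" using t e_pos by simp
  then obtain s0 where s0: "0 < s0" "m s0 t < e" unfolding pm_O_def by (auto simp: INF_less_iff)
  have s0e: "s0 < e"
  proof (rule ccontr)
    assume "\<not> s0 < e" hence "e \<le> s0" by simp
    hence "m e t \<le> m s0 t" by (rule mono1)
    thus False using s0 et by simp
  qed
  have s0i: "s0 < \<infinity>" using less_le_trans[OF s0e top_greatest] by simp
  have "((m s0) \<longlongrightarrow> m s0 t) (at t within UNIV)"
    using cont2[OF s0(1) s0i] unfolding continuous_on_def by auto
  then have "eventually (\<lambda>u. m s0 u < e) (at t within UNIV)" using s0(2) by (rule order_tendstoD(2))
  from ev_right[OF this t(2)] obtain b where b: "b > t" "\<forall>u. t < u \<and> u < b \<and> u \<in> UNIV \<longrightarrow> m s0 u < e"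
    by blast
  obtain t' where t': "t < t'" "t' < b" using dense[OF b(1)] by blast
  have "m s0 t' < e" using b(2) t' by auto
  hence "Ob (m s0 t') = 0" using F_down[OF N] by simp
  moreover have "Ob (m s0 t') = Ob t'" by (rule O_mult_F) (use F_down[OF N] s0e s0 in auto)
  ultimately show ?thesis using t' by auto
qed

lemma Fmem: "x \<in> pm_finite_set m \<longleftrightarrow> Ob x = 0" unfolding pm_finite_set_def by simp

lemma F_shape: assumes N: "Ob e = 0"
  shows "pm_finite_set m = UNIV \<or> (\<exists>\<phi>. e < \<phi> \<and> pm_finite_set m = {0..<\<phi>})"
proof (cases "Ob \<infinity> = 0")
  case True
  hence "pm_finite_set m = UNIV" using F_down[OF True] by (auto simp: Fmem)
  thus ?thesis by simp
next
  case False
  define \<phi> where "\<phi> = Sup (pm_finite_set m)"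
  have 1: "x < \<phi>" if xF: "Ob x = 0" for x
  proof -
    have "x \<noteq> \<infinity>" using xF False by auto
    then obtain t' where "t' > x" "Ob t' = 0" using F_up[OF N xF] by (auto simp: less_top)
    moreover have "t' \<le> \<phi>" unfolding \<phi>_def using \<open>Ob t' = 0\<close> by (intro Sup_upper) (simp add: Fmem)
    ultimately show ?thesis by simp
  qed
  have 2: "Ob x = 0" if xl: "x < \<phi>" for x
  proof -
    obtain t where "t \<in> pm_finite_set m" "x < t" using xl unfolding \<phi>_def by (auto simp: less_Sup_iff)
    thus ?thesis using F_down by (auto simp: Fmem)
  qed
  have "pm_finite_set m = {0..<\<phi>}" using 1 2 by (auto simp: Fmem)
  moreover have "e < \<phi>" using 1 N by simp
  ultimately show ?thesis by blast
qed

lemma phi_part: assumes F: "pm_finite_set m = {0..<\<phi>}"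
  shows "Ob \<phi> = \<phi> \<and> (\<forall>t. 0 < t \<and> t \<le> \<phi> \<longrightarrow> m t \<phi> = \<phi> \<and> m \<phi> t = \<phi>) \<and> m \<phi> \<phi> = \<phi>"
proof -
  have Fi: "Ob x = 0 \<longleftrightarrow> x < \<phi>" for x using F by (auto simp: Fmem[symmetric])
  have phip: "0 < \<phi>" using Fi[of 0] by simp
  obtain t0 where t0: "0 < t0" "t0 < \<phi>" using dense[OF phip] by blast
  have N: "Ob e = 0"
  proof (rule ccontr)
    assume "Ob e \<noteq> 0" hence "0 < Ob e" by (simp add: zero_less_iff_neq_zero)
    from degen_no_pos[OF this t0(1)] show False using Fi[of t0] t0 by simp
  qed
  have ephi: "e < \<phi>" using Fi N by simp
  have Ophi: "Ob \<phi> = \<phi>"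
  proof (rule antisym)
    show "Ob \<phi> \<le> \<phi>" by (rule O_le_self)
    show "\<phi> \<le> Ob \<phi>"
    proof (rule ccontr)
      assume "\<not> \<phi> \<le> Ob \<phi>" hence "Ob \<phi> < \<phi>" by simp
      then obtain s where s: "0 < s" "m s \<phi> < \<phi>" unfolding pm_O_def by (auto simp: INF_less_iff)
      have "s < e"
      proof (rule ccontr)
        assume "\<not> s < e" hence "m e \<phi> \<le> m s \<phi>" by (intro mono1) simp
        thus False using s by simp
      qed
      hence "Ob s = 0" using Fi ephi by simp
      hence "Ob (m s \<phi>) = Ob \<phi>" using s by (intro O_mult_F)
      moreover have "Ob (m s \<phi>) = 0" using Fi s by simp
      ultimately show False using Fi[of \<phi>] by simp
    qed
  qed
  have A: "m t \<phi> = \<phi>" if t: "0 < t" "t < \<phi>" for t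
  proof (rule antisym)
    show "\<phi> \<le> m t \<phi>" using O_le[OF t(1), of \<phi>] Ophi by simp
    show "m t \<phi> \<le> \<phi>"
    proof (rule ccontr)
      assume "\<not> m t \<phi> \<le> \<phi>" hence gt: "\<phi> < m t \<phi>" by simp
      have ti: "t < \<infinity>" using less_le_trans[OF t(2) top_greatest] by simp
      have "((m t) \<longlongrightarrow> m t \<phi>) (at \<phi> within UNIV)"
        using cont2[OF t(1) ti] unfolding continuous_on_def by auto
      then have "eventually (\<lambda>u. \<phi> < m t u) (at \<phi> within UNIV)" using gt by (rule order_tendstoD(1))
      from ev_left[OF this phip] obtain b where b: "b < \<phi>" "\<forall>u. b < u \<and> u < \<phi> \<and> u \<in> UNIV \<longrightarrow> \<phi> < m t u"
        by blast
      obtain u where u: "b < u" "u < \<phi>" using dense[OF b(1)] by blast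
      have "\<phi> < m t u" using b(2) u by auto
      moreover have "Ob (m t u) = Ob u" using t Fi by (intro O_mult_F) auto
      hence "Ob (m t u) = 0" using Fi u by simp
      ultimately show False using Fi by simp
    qed
  qed
  have B: "m \<phi> \<phi> = \<phi>"
  proof (rule antisym)
    show "\<phi> \<le> m \<phi> \<phi>" using O_le[OF phip, of \<phi>] Ophi by simp
    show "m \<phi> \<phi> \<le> \<phi>"
    proof (rule ccontr)
      assume "\<not> m \<phi> \<phi> \<le> \<phi>" hence gt: "\<phi> < m \<phi> \<phi>" by simp
      have "((\<lambda>s. m s \<phi>) \<longlongrightarrow> m \<phi> \<phi>) (at \<phi> within {0<..})"
        using cont1[of \<phi>] phip unfolding continuous_on_def by auto
      then have "eventually (\<lambda>u. \<phi> < m u \<phi>) (at \<phi> within {0<..})" using gt by (rule order_tendstoD(1))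
      from ev_left[OF this phip] obtain b where b: "b < \<phi>" "\<forall>u. b < u \<and> u < \<phi> \<and> u \<in> {0<..} \<longrightarrow> \<phi> < m u \<phi>"
        by blast
      obtain u where u: "b < u" "u < \<phi>" using dense[OF b(1)] by blast
      have up: "0 < u" using u(1) by (metis le_less_trans zero_le)
      have "\<phi> < m u \<phi>" using b(2) u up by auto
      thus False using A[OF up u(2)] by simp
    qed
  qed
  have C: "m \<phi> t = \<phi>" if t: "0 < t" "t \<le> \<phi>" for t
  proof (rule antisym)
    show "m \<phi> t \<le> \<phi>" using mono2[OF t(2), of \<phi>] B by simp
    have "Ob (m \<phi> t) = m \<phi> t" using O_mult_pos[of \<phi> t] Ophi phip by simp
    moreover have "0 < m \<phi> t" using pos phip t by simp
    ultimately show "\<phi> \<le> m \<phi> t" using Fi[of "m \<phi> t"] by (auto simp: not_less[symmetric])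
  qed
  show ?thesis using Ophi A B C by (metis order_le_less)
qed

lemma Rid: assumes N: "Ob e = 0" and p: "m p p = p" "p \<le> e" and x: "x \<le> p" shows "m x p = x"
proof (cases "x = 0")
  case True thus ?thesis by simp
next
  case False
  hence xp: "0 < x" by (simp add: zero_less_iff_neq_zero)
  have "Ob p = 0" using F_down[OF N p(2)] .
  hence "Ob p < x" using xp by simp
  then obtain s0 where s0: "0 < s0" "m s0 p < x" unfolding pm_O_def by (auto simp: INF_less_iff)
  have s0e: "s0 \<le> e"
  proof (rule ccontr)
    assume "\<not> s0 \<le> e" hence "m e p \<le> m s0 p" by (intro mono1) simp
    thus False using s0 x by simp
  qed
  have cont: "continuous_on {s0..e} (\<lambda>s. m s p)"
    by (rule continuous_on_subset[OF cont1]) (use s0 in auto)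
  have "\<exists>z. s0 \<le> z \<and> z \<le> e \<and> m z p = x"
    by (rule IVT'[OF _ _ s0e cont]) (use s0 x in auto)
  then obtain z where z: "m z p = x" by blast
  have "m x p = m z (m p p)" using z[symmetric] by (simp add: assoc)
  thus ?thesis using z p by simp
qed

lemma Lid: assumes N: "Ob e = 0" and p: "m p p = p" "p \<le> e" and x: "x \<le> p" shows "m p x = x"
proof (cases "p = e")
  case True thus ?thesis by simp
next
  case False
  hence pi: "p < \<infinity>" using p(2) less_le_trans[OF _ top_greatest, of p e] by (simp add: order_le_less)
  show ?thesis
  proof (cases "p = 0")
    case True thus ?thesis using x by simp
  next
    case False
    hence pp: "0 < p" by (simp add: zero_less_iff_neq_zero)
    have pe: "m p e = p" using Rid[OF N _ _ p(2)] by simp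
    have cont: "continuous_on {0..e} (m p)"
      by (rule continuous_on_subset[OF cont2[OF pp pi]]) auto
    obtain z where z: "m p z = x"
      using IVT'[of "m p" 0 x e, OF _ _ _ cont] x pe by auto
    have "m p x = m (m p p) z" using z by (simp add: assoc)
    thus ?thesis using z p by simp
  qed
qed

lemma between: assumes N: "Ob e = 0" and p: "m p p = p" "a \<le> p" "p \<le> b" "b \<le> e"
  shows "m a b = m b a"
proof -
  have pe: "p \<le> e" using p by simp
  have ae: "a \<le> e" using p by simp
  have 1: "m a b = a"
  proof (rule antisym)
    show "m a b \<le> a" using mono2[OF p(4), of a] Rid[OF N _ order_refl ae] by simp
    show "a \<le> m a b" using mono2[OF p(3), of a] Rid[OF N p(1) pe p(2)] by simp
  qed
  have 2: "m b a = a"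
  proof (rule antisym)
    show "m b a \<le> a" using mono1[OF p(4), of a] by simp
    show "a \<le> m b a" using mono1[OF p(3), of a] Lid[OF N p(1) pe p(2)] by simp
  qed
  show ?thesis using 1 2 by simp
qed

lemma idem_close: assumes l: "0 < l" "l < \<infinity>" "m l l < l" shows "\<exists>u>l. m u u < l"
proof -
  have "((\<lambda>u. m u u) \<longlongrightarrow> m l l) (at l within {0<..<\<infinity>})"
    using contd l unfolding continuous_on_def by auto
  then have "eventually (\<lambda>u. m u u < l) (at l within {0<..<\<infinity>})" using l(3) by (rule order_tendstoD(2))
  from ev_right[OF this l(2)] obtain b where
    b: "b > l" "\<forall>u. l < u \<and> u < b \<and> u \<in> {0<..<\<infinity>} \<longrightarrow> m u u < l" by blast
  have "l < min b \<infinity>" using b l by simp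
  then obtain u where u: "l < u" "u < min b \<infinity>" using dense by blast
  have "0 < u" using u l by simp
  moreover have "u < b" "u < \<infinity>" using u(2) by (simp_all only: min_less_iff_conj)
  ultimately show ?thesis using b(2) u(1) by (intro exI[of _ u]) auto
qed

lemma pw_add: "m (pw m x i) (pw m x j) = pw m x (Suc (i + j))"
proof (induction j)
  case 0 thus ?case by simp
next
  case (Suc j)
  have "m (pw m x i) (pw m x (Suc j)) = m (m (pw m x i) (pw m x j)) x" by (simp add: assoc)
  also have "\<dots> = pw m x (Suc (i + Suc j))" using Suc by simp
  finally show ?case .
qed

lemma pw_le: assumes N: "Ob e = 0" and q: "m q q = q" "q \<le> e" "x \<le> q"
  shows "pw m x n \<le> x" "pw m x (Suc n) \<le> pw m x n"
proof -
  show 1: "pw m x n \<le> x" for n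
  proof (induction n)
    case 0 thus ?case by simp
  next
    case (Suc n)
    have "pw m x (Suc n) \<le> m (pw m x n) q" using mono2[OF q(3)] by simp
    also have "\<dots> = pw m x n" using Rid[OF N q(1,2)] Suc q(3) by simp
    finally show ?case using Suc by simp
  qed
  have "pw m x (Suc n) \<le> m (pw m x n) q" using mono2[OF q(3)] by simp
  also have "\<dots> = pw m x n" using Rid[OF N q(1,2)] 1[of n] q(3) by simp
  finally show "pw m x (Suc n) \<le> pw m x n" .
qed

lemma final:
  assumes N: "Ob e = 0" and q: "m q q = q" "q \<le> e" "b < q"
    and K: "\<forall>x. b < x \<longrightarrow> x < q \<longrightarrow> (\<exists>Y. C \<le> Y \<and> m (m Y x) x \<le> E)"
    and C: "0 < C" "C < \<infinity>" "C \<le> q"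
  shows "C \<le> E"
proof (rule ccontr)
  assume "\<not> C \<le> E" hence EC: "E < C" by simp
  then obtain D where D: "E < D" "D < C" using dense by blast
  have qp: "0 < q" using q(3) by (metis le_less_trans zero_le)
  have Dp: "0 < D" using D(1) by (metis le_less_trans zero_le)
  have Di: "D < \<infinity>" using D(2) C(2) by simp
  have Cq: "m C q = C" using Rid[OF N q(1,2) C(3)] .
  have Dq: "m D q = D" using Rid[OF N q(1,2)] D(2) C(3) by simp
  have "((m C) \<longlongrightarrow> m C q) (at q within UNIV)" using cont2[OF C(1,2)] unfolding continuous_on_def by auto
  then have "eventually (\<lambda>u. D < m C u) (at q within UNIV)" using Cq D(2) by (intro order_tendstoD(1)) auto
  from ev_left[OF this qp] obtain b1 where b1: "b1 < q" "\<forall>u. b1 < u \<and> u < q \<and> u \<in> UNIV \<longrightarrow> D < m C u"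
    by blast
  have "((m D) \<longlongrightarrow> m D q) (at q within UNIV)" using cont2[OF Dp Di] unfolding continuous_on_def by auto
  then have "eventually (\<lambda>u. E < m D u) (at q within UNIV)" using Dq D(1) by (intro order_tendstoD(1)) auto
  from ev_left[OF this qp] obtain b2 where b2: "b2 < q" "\<forall>u. b2 < u \<and> u < q \<and> u \<in> UNIV \<longrightarrow> E < m D u"
    by blast
  have "max (max b b1) b2 < q" using b1 b2 q by simp
  then obtain x where x: "max (max b b1) b2 < x" "x < q" using dense by blast
  obtain Y where Y: "C \<le> Y" "m (m Y x) x \<le> E" using K x by auto
  have "D < m C x" using b1(2) x by auto
  also have "m C x \<le> m Y x" using mono1[OF Y(1)] .
  finally have "m D x \<le> m (m Y x) x" using mono1 by simp
  moreover have "E < m D x" using b2(2) x by auto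
  ultimately show False using Y(2) by simp
qed

lemma comm_le: assumes N: "Ob e = 0" and ab: "a \<le> b" "b \<le> e" shows "m a b = m b a"
proof (cases "a = 0")
  case True thus ?thesis by simp
next
  case False
  hence ap: "0 < a" by (simp add: zero_less_iff_neq_zero)
  hence bp: "0 < b" using ab by simp
  show ?thesis
  proof (cases "\<exists>p. m p p = p \<and> a \<le> p \<and> p \<le> b")
    case True thus ?thesis using between[OF N] ab by blast
  next
    case False
    hence noI: "\<And>p. m p p = p \<Longrightarrow> a \<le> p \<Longrightarrow> p \<le> b \<Longrightarrow> False" by blast
    define Q where "Q = {p. m p p = p \<and> b \<le> p \<and> p \<le> e}"
    define q where "q = Inf Q"
    have eQ: "e \<in> Q" using ab unfolding Q_def by simp
    have qb: "b \<le> q" unfolding q_def by (rule Inf_greatest) (simp add: Q_def)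
    have qe: "q \<le> e" unfolding q_def by (rule Inf_lower[OF eQ])
    have qidem: "m q q = q"
    proof (rule antisym)
      show "m q q \<le> q" unfolding q_def
      proof (rule Inf_greatest)
        fix p assume pQ: "p \<in> Q"
        have qp: "Inf Q \<le> p" by (rule Inf_lower[OF pQ])
        have "m (Inf Q) (Inf Q) \<le> m p (Inf Q)" by (rule mono1[OF qp])
        also have "\<dots> \<le> m p p" by (rule mono2[OF qp])
        finally show "m (Inf Q) (Inf Q) \<le> p" using pQ by (simp add: Q_def)
      qed
      show "q \<le> m q q"
      proof (rule ccontr)
        assume "\<not> q \<le> m q q" hence lt: "m q q < q" by simp
        have qp: "0 < q" using qb bp by simp
        have qi: "q < \<infinity>"
        proof (rule ccontr)
          assume "\<not> q < \<infinity>" hence "q = \<infinity>" by (simp add: not_less top_unique)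
          hence "q = e" using qe by (simp add: top_unique)
          thus False using lt by simp
        qed
        obtain u where u: "u > q" "m u u < q" using idem_close[OF qp qi lt] by blast
        have "Inf Q < u" using u q_def by simp
        then obtain p where p: "p \<in> Q" "p < u" by (auto simp: Inf_less_iff)
        have "m p p \<le> m u u" using mono1[of p u p] mono2[of p u u] p(2) by (meson order_less_imp_le order_trans)
        moreover have "q \<le> p" unfolding q_def by (rule Inf_lower[OF p(1)])
        ultimately show False using p(1) u(2) by (simp add: Q_def)
      qed
    qed
    have bq: "b < q" using noI[OF qidem ] ab qb by (metis order_le_less)
    have bi: "b < \<infinity>" using less_le_trans[OF bq top_greatest] by simp
    have K: "(\<exists>Y. m a b \<le> Y \<and> m (m Y x) x \<le> m b a) \<and> (\<exists>Y. m b a \<le> Y \<and> m (m Y x) x \<le> m a b)"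
      if x: "b < x" "x < q" for x
    proof -
      have xq: "x \<le> q" using x by simp
      define l where "l = (INF n. pw m x n)"
      have lx: "l \<le> x" unfolding l_def using INF_lower[of 0 UNIV "pw m x"] by simp
      have lidem: "m l l = l"
      proof (rule antisym)
        show "m l l \<le> l" unfolding l_def
        proof (rule INF_greatest)
          fix n :: nat assume "n \<in> UNIV"
          have "m (INF n. pw m x n) (INF n. pw m x n) \<le> m (pw m x n) (pw m x n)"
            by (intro order_trans[OF mono1 mono2] INF_lower) auto
          also have "\<dots> = pw m x (Suc (n + n))" by (rule pw_add)
          also have "\<dots> \<le> pw m x n"
          proof -
            have "decseq (pw m x)" by (rule decseq_SucI) (rule pw_le(2)[OF N qidem qe xq])
            hence "pw m x (Suc (n + n)) \<le> pw m x n" by (rule decseqD) simp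
            thus ?thesis .
          qed
          finally show "m (INF n. pw m x n) (INF n. pw m x n) \<le> pw m x n" .
        qed
        show "l \<le> m l l"
        proof (rule ccontr)
          assume "\<not> l \<le> m l l" hence lt: "m l l < l" by simp
          have lp: "0 < l" using lt by (metis zero_less_iff_neq_zero zero(1))
          have xi: "x < \<infinity>" using less_le_trans[OF x(2) top_greatest] by simp
          have li: "l < \<infinity>" using le_less_trans[OF lx xi] .
          obtain u where u: "u > l" "m u u < l" using idem_close[OF lp li lt] by blast
          have "(INF n. pw m x n) < u" using u l_def by simp
          then obtain n where n: "pw m x n < u" by (auto simp: INF_less_iff)
          have "m (pw m x n) (pw m x n) \<le> m u u" using mono1[of "pw m x n" u] mono2[of "pw m x n" u u] n
            by (meson order_less_imp_le order_trans)
          moreover have "l \<le> pw m x (Suc (n + n))" unfolding l_def by (rule INF_lower) simp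
          ultimately show False using pw_add[of x n n] u(2) by simp
        qed
      qed
      have la: "l < a"
      proof (rule ccontr)
        assume "\<not> l < a" hence al: "a \<le> l" by simp
        show False
        proof (cases "b \<le> l")
          case True
          have "l \<le> e" using lx x qe by simp
          hence "l \<in> Q" using True lidem by (simp add: Q_def)
          hence "q \<le> l" unfolding q_def by (rule Inf_lower)
          thus False using lx x by simp
        next
          case False thus False using noI[OF lidem al] by (simp add: not_le order_less_imp_le)
        qed
      qed
      then obtain n0 where n0: "pw m x n0 < a" unfolding l_def by (auto simp: INF_less_iff)
      have sand: "\<exists>i. pw m x (Suc i) \<le> y \<and> y \<le> pw m x i" if y: "y \<le> b" "a \<le> y" for y
      proof -
        have "pw m x n0 \<le> y" using n0 y by simp
        moreover have "\<not> pw m x 0 \<le> y" using y x by simp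
        ultimately obtain i where "\<not> pw m x i \<le> y" "pw m x (Suc i) \<le> y"
          using least_step[of "\<lambda>n. pw m x n \<le> y"] by blast
        thus ?thesis by (intro exI[of _ i]) simp
      qed
      obtain i where i: "pw m x (Suc i) \<le> a" "a \<le> pw m x i" using sand ab by blast
      obtain j where j: "pw m x (Suc j) \<le> b" "b \<le> pw m x j" using sand ab by blast
      have 1: "m a b \<le> m (pw m x i) (pw m x j)" using mono1[OF i(2)] mono2[OF j(2)] order_trans by blast
      have 2: "m (pw m x (Suc j)) (pw m x (Suc i)) \<le> m b a" using mono1[OF j(1)] mono2[OF i(1)] order_trans by blast
      have 3: "m b a \<le> m (pw m x j) (pw m x i)" using mono1[OF j(2)] mono2[OF i(2)] order_trans by blast
      have 4: "m (pw m x (Suc i)) (pw m x (Suc j)) \<le> m a b" using mono1[OF i(1)] mono2[OF j(1)] order_trans by blast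
      show ?thesis
      proof (intro conjI)
        show "\<exists>Y. m a b \<le> Y \<and> m (m Y x) x \<le> m b a"
          using 1 2 pw_add[of x i j] pw_add[of x "Suc j" "Suc i"]
          by (intro exI[of _ "pw m x (Suc (i + j))"]) (simp add: add.commute)
        show "\<exists>Y. m b a \<le> Y \<and> m (m Y x) x \<le> m a b"
          using 3 4 pw_add[of x j i] pw_add[of x "Suc i" "Suc j"]
          by (intro exI[of _ "pw m x (Suc (j + i))"]) (simp add: add.commute)
      qed
    qed
    have ae: "a \<le> e" using ab by simp
    have abq: "m a b \<le> a" using mono2[OF ab(2), of a] Rid[OF N _ order_refl ae] by simp
    have baq: "m b a \<le> a" using mono1[OF ab(2), of a] by simp
    have aq: "a < q" using ab bq by simp
    have ai: "a < \<infinity>" using less_le_trans[OF aq top_greatest] by simp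
    have "m a b \<le> m b a"
      by (rule final[OF N qidem qe bq]) (use K pos[OF ap bp] abq aq ai in auto)
    moreover have "m b a \<le> m a b"
      by (rule final[OF N qidem qe bq]) (use K pos[OF bp ap] baq aq ai in auto)
    ultimately show ?thesis by simp
  qed
qed

lemma comm: assumes N: "Ob e = 0" shows "\<forall>a\<in>{0..e}. \<forall>b\<in>{0..e}. m a b = m b a"
proof (intro ballI)
  fix a b assume "a \<in> {0..e}" "b \<in> {0..e}"
  thus "m a b = m b a" using comm_le[OF N, of a b] comm_le[OF N, of b a] by (cases "a \<le> b") auto
qed

end

theorem theorem2p8:
  fixes m :: "ennreal \<Rightarrow> ennreal \<Rightarrow> ennreal" and e :: ennreal
  assumes pm: "pseudo_mult m e"
  shows "(pm_nondegenerate m e \<longleftrightarrow> (\<exists>t>0. t \<in> pm_finite_set m))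
       \<and> (pm_nondegenerate m e \<longleftrightarrow> (\<forall>a\<in>{0..e}. \<forall>b\<in>{0..e}. m a b = m b a))
       \<and> (pm_nondegenerate m e \<longleftrightarrow>
            (pm_finite_set m = UNIV \<or> (\<exists>\<phi>. e < \<phi> \<and> pm_finite_set m = {0..<\<phi>})))
       \<and> (\<forall>\<phi>. pm_finite_set m = {0..<\<phi>} \<longrightarrow>
            pm_O m \<phi> = \<phi> \<and> (\<forall>t. 0 < t \<and> t \<le> \<phi> \<longrightarrow> m t \<phi> = \<phi> \<and> m \<phi> t = \<phi>) \<and> m \<phi> \<phi> = \<phi>)"
proof -
  interpret P: PM m e by unfold_locales (rule pm)
  have nd: "pm_nondegenerate m e \<longleftrightarrow> pm_O m e = 0" by (simp add: pm_nondegenerate_def)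
  have pos_iff: "pm_O m e \<noteq> 0 \<Longrightarrow> 0 < pm_O m e" by (simp add: zero_less_iff_neq_zero)
  have A: "pm_nondegenerate m e \<longleftrightarrow> (\<exists>t>0. t \<in> pm_finite_set m)"
  proof
    assume "pm_nondegenerate m e"
    thus "\<exists>t>0. t \<in> pm_finite_set m" using P.e_pos nd P.Fmem by blast
  next
    assume "\<exists>t>0. t \<in> pm_finite_set m"
    then obtain t where t: "0 < t" "pm_O m t = 0" using P.Fmem by blast
    show "pm_nondegenerate m e"
    proof (rule ccontr)
      assume "\<not> pm_nondegenerate m e"
      hence "0 < pm_O m e" using nd pos_iff by simp
      from P.degen_no_pos[OF this t(1)] show False using t by simp
    qed
  qed
  have B: "pm_nondegenerate m e \<longleftrightarrow> (\<forall>a\<in>{0..e}. \<forall>b\<in>{0..e}. m a b = m b a)"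
  proof
    assume "pm_nondegenerate m e"
    thus "\<forall>a\<in>{0..e}. \<forall>b\<in>{0..e}. m a b = m b a" using P.comm nd by simp
  next
    assume c: "\<forall>a\<in>{0..e}. \<forall>b\<in>{0..e}. m a b = m b a"
    show "pm_nondegenerate m e"
    proof (rule ccontr)
      assume "\<not> pm_nondegenerate m e"
      hence "0 < pm_O m e" using nd pos_iff by simp
      from P.degen_noncomm[OF this] show False using c by blast
    qed
  qed
  have C: "pm_nondegenerate m e \<longleftrightarrow>
            (pm_finite_set m = UNIV \<or> (\<exists>\<phi>. e < \<phi> \<and> pm_finite_set m = {0..<\<phi>}))"
  proof
    assume "pm_nondegenerate m e"
    thus "pm_finite_set m = UNIV \<or> (\<exists>\<phi>. e < \<phi> \<and> pm_finite_set m = {0..<\<phi>})"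
      using P.F_shape nd by simp
  next
    assume "pm_finite_set m = UNIV \<or> (\<exists>\<phi>. e < \<phi> \<and> pm_finite_set m = {0..<\<phi>})"
    hence "e \<in> pm_finite_set m" by auto
    thus "pm_nondegenerate m e" using nd P.Fmem by simp
  qed
  have D: "\<forall>\<phi>. pm_finite_set m = {0..<\<phi>} \<longrightarrow>
            pm_O m \<phi> = \<phi> \<and> (\<forall>t. 0 < t \<and> t \<le> \<phi> \<longrightarrow> m t \<phi> = \<phi> \<and> m \<phi> t = \<phi>) \<and> m \<phi> \<phi> = \<phi>"
    using P.phi_part by blast
  show ?thesis by (rule conjI[OF A conjI[OF B conjI[OF C D]]])
qed

end
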